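(* Let $n\ge 5$ and let $G$ be a graph on $n$ vertices with non-negative integer edge weights such that every subgraph spanned by at least $4$ vertices has total weight at least $3$. Then there is a vertex $v$ of $G$ with $d(v)\ge \tfrac{2}{3}n-\tfrac{4}{3}$.
   Context: The total weight of a subgraph is the sum of its edge weights; the subgraph spanned by a vertex set consists of those vertices and all edges between them. For a vertex $v$, $d(v)=\sum_{u\ne v}\operatorname{wt}(uv)$ is the sum of the weights of edges incident to $v$ (a missing edge has weight $0$). *)

theory Defs
  imports Complex_Main
begin

text \<open>A weighted graph on a finite vertex set V is given by a symmetric weight
function w on pairs of vertices with values in nat (non-negative integers);
only pairs of distinct vertices matter; a missing edge has weight 0.\<close>

definition total_weight :: "('a \<Rightarrow> 'a \<Rightarrow> nat) \<Rightarrow> 'a set \<Rightarrow> nat" where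
  "total_weight w S = (\<Sum>(u,v)\<in>{(u,v). u \<in> S \<and> v \<in> S \<and> u \<noteq> v}. w u v) div 2"

definition wdeg :: "('a \<Rightarrow> 'a \<Rightarrow> nat) \<Rightarrow> 'a set \<Rightarrow> 'a \<Rightarrow> nat" where
  "wdeg w V v = (\<Sum>u\<in>V - {v}. w u v)"

end

theory Submission
  imports Defs
begin

lemma tw4:
  assumes sym: "\<And>u v. w u v = w v u" and d: "distinct [a,b,c,e]"
  shows "total_weight w {a,b,c,e} = w a b + w a c + w a e + w b c + w b e + w c e"
proof -
  let ?S = "{a,b,c,e}"
  have eq: "{(u,v). u \<in> ?S \<and> v \<in> ?S \<and> u \<noteq> v} = Sigma ?S (\<lambda>u. ?S - {u})" by auto
  have "(\<Sum>(u,v)\<in>Sigma ?S (\<lambda>u. ?S - {u}). w u v) = (\<Sum>u\<in>?S. \<Sum>v\<in>?S - {u}. w u v)"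
    by (rule sum.Sigma[symmetric]) auto
  also have "\<dots> = 2 * (w a b + w a c + w a e + w b c + w b e + w c e)"
  proof -
    have s1: "?S - {a} = {b,c,e}" "?S - {b} = {a,c,e}" "?S - {c} = {a,b,e}" "?S - {e} = {a,b,c}"
      using d by auto
    show ?thesis using d
      by (simp add: s1 sym[of b a] sym[of c a] sym[of e a] sym[of c b] sym[of e b] sym[of e c])
  qed
  finally show ?thesis unfolding total_weight_def eq by simp
qed

theorem lemma7p6:
  fixes V :: "'a set" and w :: "'a \<Rightarrow> 'a \<Rightarrow> nat" and n :: nat
  assumes "finite V" and "card V = n" and "n \<ge> 5"
    and "\<And>u v. w u v = w v u"
    and "\<And>S. S \<subseteq> V \<Longrightarrow> card S \<ge> 4 \<Longrightarrow> total_weight w S \<ge> 3"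
  shows "\<exists>v\<in>V. real (wdeg w V v) \<ge> 2 / 3 * real n - 4 / 3"
proof -
  note fin = assms(1) and cV = assms(2) and n5 = assms(3) and sym = assms(4) and H = assms(5)
  have key: "\<exists>v\<in>V. 3 * wdeg w V v \<ge> 2 * n - 4"
  proof -
    from n5 cV have "V \<noteq> {}" by auto
    then obtain x where xV: "x \<in> V" by auto
    define A where "A = {u\<in>V-{x}. w u x = 0}"
    show ?thesis
    proof (cases "\<exists>z\<in>A. \<exists>t\<in>A. z \<noteq> t \<and> w z t \<le> 1")
      case True
      then obtain z t where zA: "z \<in> A" and tA: "t \<in> A" and zt: "z \<noteq> t" and wzt: "w z t \<le> 1" by blast
      have zV: "z \<in> V" and tV: "t \<in> V" and xz: "x \<noteq> z" and xt: "x \<noteq> t"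
        and wzx: "w z x = 0" and wtx: "w t x = 0" using zA tA A_def by auto
      define U where "U = V - {x,z,t}"
      have finU: "finite U" using fin U_def by auto
      have cU: "card U = n - 3" using cV xV zV tV xz xt zt fin unfolding U_def
        by (simp add: card_Diff_subset)
      have each: "w u x + w u z + w u t + w z t \<ge> 3" if uU: "u \<in> U" for u
      proof -
        have uV: "u \<in> V" and ux: "u \<noteq> x" and uz: "u \<noteq> z" and ut: "u \<noteq> t" using uU U_def by auto
        have dist: "distinct [x,z,t,u]" using ux uz ut xz xt zt by auto
        have "card {x,z,t,u} = 4" using dist by simp
        moreover have "{x,z,t,u} \<subseteq> V" using xV zV tV uV by auto
        ultimately have "total_weight w {x,z,t,u} \<ge> 3" using H by auto
        thus ?thesis using tw4[OF sym dist] wzx wtx sym[of x z] sym[of x t] sym[of x u] sym[of z u] sym[of t u]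
          by simp
      qed
      have sumge: "(\<Sum>u\<in>U. w u x + w u z + w u t + w z t) \<ge> (\<Sum>u\<in>U. 3)"
        by (rule sum_mono) (use each in auto)
      have decx: "V - {x} = insert z (insert t U)" using U_def zV tV xz xt by auto
      have decz: "V - {z} = insert x (insert t U)" using U_def xV tV xz zt by auto
      have dect: "V - {t} = insert x (insert z U)" using U_def xV zV xt zt by auto
      have nzU: "z \<notin> U" "t \<notin> U" "x \<notin> U" using U_def by auto
      have dx: "wdeg w V x = (\<Sum>u\<in>U. w u x)"
        unfolding wdeg_def decx using finU nzU zt wzx wtx by simp
      have dz: "wdeg w V z = w z t + (\<Sum>u\<in>U. w u z)"
        unfolding wdeg_def decz using finU nzU xt wzx sym[of x z] sym[of t z] by simp
      have dt: "wdeg w V t = w z t + (\<Sum>u\<in>U. w u t)"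
        unfolding wdeg_def dect using finU nzU xz zt wtx sym[of x t] by simp
      have "(\<Sum>u\<in>U. w u x + w u z + w u t + w z t) = wdeg w V x + wdeg w V z + wdeg w V t + (n-3) * w z t - 2 * w z t"
        using dx dz dt cU by (simp add: sum.distrib)
      hence ineq: "wdeg w V x + wdeg w V z + wdeg w V t + (n-3) * w z t \<ge> 3 * (n-3) + 2 * w z t"
        using sumge cU dz dt by simp
      have "wdeg w V x + wdeg w V z + wdeg w V t \<ge> 2 * n - 4"
      proof (cases "w z t = 0")
        case True thus ?thesis using ineq n5 by simp
      next
        case False hence "w z t = 1" using wzt by simp
        thus ?thesis using ineq n5 by simp
      qed
      hence "3 * wdeg w V x \<ge> 2*n-4 \<or> 3 * wdeg w V z \<ge> 2*n-4 \<or> 3 * wdeg w V t \<ge> 2*n-4" by linarith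
      thus ?thesis using xV zV tV by blast
    next
      case False
      hence big: "\<And>z t. z \<in> A \<Longrightarrow> t \<in> A \<Longrightarrow> z \<noteq> t \<Longrightarrow> w z t \<ge> 2" by force
      define B where "B = {u\<in>V-{x}. w u x \<noteq> 0}"
      have AB: "V - {x} = A \<union> B" "A \<inter> B = {}" using A_def B_def by auto
      have finA: "finite A" and finB: "finite B" using fin A_def B_def by auto
      have cAB: "card A + card B = n - 1" using AB finA finB card_Un_disjoint[OF finA finB] cV xV fin
        by (metis card_Diff_singleton)
      have e1: "wdeg w V x = (\<Sum>u\<in>A. w u x) + (\<Sum>u\<in>B. w u x)"
        unfolding wdeg_def AB(1) by (rule sum.union_disjoint[OF finA finB AB(2)])
      have e2: "(\<Sum>u\<in>A. w u x) = 0" using A_def by simp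
      have e3: "(\<Sum>u\<in>B. w u x) \<ge> (\<Sum>u\<in>B. 1)" by (rule sum_mono) (auto simp: B_def)
      have dxB: "wdeg w V x \<ge> card B" using e1 e2 e3 by simp
      show ?thesis
      proof (cases "A = {}")
        case True
        hence "wdeg w V x \<ge> n - 1" using dxB cAB by simp
        thus ?thesis using xV by (intro bexI[of _ x]) auto
      next
        case False
        then obtain z where zA: "z \<in> A" by auto
        have zV: "z \<in> V" using zA A_def by auto
        have "A - {z} \<subseteq> V - {z}" using A_def by auto
        hence "wdeg w V z \<ge> (\<Sum>u\<in>A - {z}. w u z)" unfolding wdeg_def
          using sum_mono2[of "V - {z}" "A - {z}" "\<lambda>u. w u z"] fin by auto
        moreover have "(\<Sum>u\<in>A - {z}. w u z) \<ge> (\<Sum>u\<in>A - {z}. 2)"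
          by (rule sum_mono) (use big zA in auto)
        ultimately have "wdeg w V z \<ge> 2 * (card A - 1)" using finA zA by simp
        hence "wdeg w V z + 2 * wdeg w V x \<ge> 2 * n - 4" using dxB cAB by linarith
        hence "3 * wdeg w V x \<ge> 2*n-4 \<or> 3 * wdeg w V z \<ge> 2*n-4" by linarith
        thus ?thesis using xV zV by blast
      qed
    qed
  qed
  then obtain v where vV: "v \<in> V" and h: "3 * wdeg w V v \<ge> 2 * n - 4" by blast
  have "real (3 * wdeg w V v) \<ge> real (2 * n - 4)" using h by linarith
  hence "3 * real (wdeg w V v) \<ge> 2 * real n - 4" using n5 by simp
  thus ?thesis using vV by (intro bexI[of _ v]) auto
qed

end
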